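(* Let $\mathcal I$ be partial. For any policy $\pi$ with shielded policy $\pi'=\mathcal G(\pi)$ and any $h\ge0$, $$\Pr(s_\triangleright\in\xi^h\mid\pi,\mathcal M)\le\Pr(s_\triangleright\in\xi^h\mid\pi',\mathcal M)+\Pr(\xi^h\cap\mathcal I\neq\varnothing\mid\pi,\mathcal M),$$ where $s_\triangleright\in\xi^h$ means $s_t=s_\triangleright$ for some $t\le h$, and $\xi^h\cap\mathcal I\neq\varnothing$ means $(s_t,a_t)\in\mathcal I$ for some $t\le h$.
   Context: $\mathcal M=(\mathcal S,\mathcal A,P,r,\gamma)$ is a discounted MDP with discrete state and action spaces and initial distribution $d_0$; $\mathcal S$ contains two distinguished unsafe states $s_\triangleright,s_\circ$ and $\mathcal S_{\mathrm{safe}}=\mathcal S\setminus\{s_\triangleright,s_\circ\}$. $\Pr(\cdot\mid\pi,\mathcal M)$ is the law of trajectories $(s_0,a_0,s_1,\dots)$ of the stationary policy $\pi$ in $\mathcal M$ with $s_0\sim d_0$, and $\xi^h=(s_0,a_0,\dots,s_h,a_h)$. An intervention rule $\mathcal G=(\bar Q,\mu,\eta)$ (backup policy $\mu$, $\eta\in[0,1]$, $\bar Q:\mathcal S_{\mathrm{safe}}\times\mathcal A\to[0,1]$) has intervention set $\mathcal I=\{(s,a)\in\mathcal S_{\mathrm{safe}}\times\mathcal A:\bar Q(s,a)-\mathbb E_{a'\sim\mu(\cdot|s)}\bar Q(s,a')>\eta\}$ and shielded policy $\mathcal G(\pi)(a|s)=\pi(a|s)\mathbb 1\{(s,a)\notin\mathcal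 I\}+w(s)\mu(a|s)$, $w(s)=\sum_{\tilde a:(s,\tilde a)\in\mathcal I}\pi(\tilde a|s)$. A set $\mathcal X\subseteq\mathcal S_{\mathrm{safe}}\times\mathcal A$ is partial if for every $(s,a)\in\mathcal X$ there is $a'$ with $(s,a')\notin\mathcal X$. *)

theory Defs
  imports "HOL-Probability.Probability_Mass_Function"
begin

(* Law of the trajectory prefix (s_0,a_0,...,s_n,a_n) (as a list of length n+1)
   started from state s. *)
fun traj_from :: "('s \<Rightarrow> 'a \<Rightarrow> 's pmf) \<Rightarrow> ('s \<Rightarrow> 'a pmf) \<Rightarrow> 's \<Rightarrow> nat \<Rightarrow> ('s \<times> 'a) list pmf" where
  "traj_from P \<pi> s 0 = map_pmf (\<lambda>a. [(s, a)]) (\<pi> s)"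
| "traj_from P \<pi> s (Suc n) =
     bind_pmf (\<pi> s) (\<lambda>a. bind_pmf (P s a) (\<lambda>s'. map_pmf (\<lambda>xs. (s, a) # xs) (traj_from P \<pi> s' n)))"

definition traj :: "'s pmf \<Rightarrow> ('s \<Rightarrow> 'a \<Rightarrow> 's pmf) \<Rightarrow> ('s \<Rightarrow> 'a pmf) \<Rightarrow> nat \<Rightarrow> ('s \<times> 'a) list pmf" where
  "traj d0 P \<pi> h = bind_pmf d0 (\<lambda>s. traj_from P \<pi> s h)"

(* Intervention set I of the rule (Qbar, mu, eta); S_safe = UNIV - {s_tri, s_circ} *)
definition intervention_set ::
  "'s \<Rightarrow> 's \<Rightarrow> ('s \<Rightarrow> 'a \<Rightarrow> real) \<Rightarrow> ('s \<Rightarrow> 'a pmf) \<Rightarrow> real \<Rightarrow> ('s \<times> 'a) set" where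
  "intervention_set s_tri s_circ Qbar \<mu> \<eta> =
     {(s, a). s \<notin> {s_tri, s_circ} \<and>
              Qbar s a - measure_pmf.expectation (\<mu> s) (\<lambda>a'. Qbar s a') > \<eta>}"

definition partial_set :: "('s \<times> 'a) set \<Rightarrow> bool" where
  "partial_set X \<longleftrightarrow> (\<forall>(s, a) \<in> X. \<exists>a'. (s, a') \<notin> X)"

definition shield :: "('s \<times> 'a) set \<Rightarrow> ('s \<Rightarrow> 'a pmf) \<Rightarrow> ('s \<Rightarrow> 'a pmf) \<Rightarrow> 's \<Rightarrow> 'a pmf" where
  "shield I \<mu> \<pi> s = embed_pmf (\<lambda>a.
      pmf (\<pi> s) a * (if (s, a) \<notin> I then 1 else 0)
      + (\<Sum>\<^sub>\<infinity>a'\<in>{a'. (s, a') \<in> I}. pmf (\<pi> s) a') * pmf (\<mu> s) a)"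

end

theory Submission
  imports Defs
begin

lemma pmf_shield:
  "pmf (shield I \<mu> \<pi> s) a = pmf (\<pi> s) a * (if (s, a) \<notin> I then 1 else 0)
      + measure_pmf.prob (\<pi> s) {a'. (s, a') \<in> I} * pmf (\<mu> s) a"
proof -
  define X where "X = {a'. (s, a') \<in> I}"
  have w: "(\<Sum>\<^sub>\<infinity>a'\<in>X. pmf (\<pi> s) a') = measure_pmf.prob (\<pi> s) X"
    by (simp add: measure_pmf_conv_infsetsum infsetsum_infsum pmf_abs_summable)
  define f where "f = (\<lambda>a. pmf (\<pi> s) a * (if (s, a) \<notin> I then 1 else 0)
      + measure_pmf.prob (\<pi> s) X * pmf (\<mu> s) a)"
  have nn: "\<And>a. 0 \<le> f a" unfolding f_def by simp
  have "(\<integral>\<^sup>+a. ennreal (f a) \<partial>count_space UNIV)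
      = (\<integral>\<^sup>+a. ennreal (pmf (\<pi> s) a) * indicator (- X) a \<partial>count_space UNIV)
        + (\<integral>\<^sup>+a. ennreal (measure_pmf.prob (\<pi> s) X) * ennreal (pmf (\<mu> s) a) \<partial>count_space UNIV)"
    unfolding f_def
    by (subst nn_integral_add[symmetric]) (auto intro!: nn_integral_cong simp: ennreal_plus ennreal_mult X_def indicator_def)
  also have "\<dots> = emeasure (\<pi> s) (- X) + ennreal (measure_pmf.prob (\<pi> s) X) * (\<integral>\<^sup>+a. ennreal (pmf (\<mu> s) a) \<partial>count_space UNIV)"
    by (simp add: nn_integral_measure_pmf[symmetric] nn_integral_cmult)
  also have "\<dots> = 1"
    using measure_pmf.prob_compl[of X "\<pi> s"]
    by (simp add: nn_integral_pmf measure_pmf.emeasure_eq_measure measure_pmf.prob_compl ennreal_plus[symmetric] Compl_eq_Diff_UNIV del: ennreal_plus)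
  finally have prob: "(\<integral>\<^sup>+a. ennreal (f a) \<partial>count_space UNIV) = 1" .
  have "pmf (shield I \<mu> \<pi> s) a = pmf (embed_pmf f) a"
    unfolding shield_def f_def w[unfolded X_def, symmetric] X_def ..
  also have "\<dots> = f a" using pmf_embed_pmf[OF nn prob] .
  finally show ?thesis unfolding f_def X_def .
qed

lemma traj_from_bound:
  fixes P :: "'s \<Rightarrow> 'a \<Rightarrow> 's pmf" and I :: "('s \<times> 'a) set"
  assumes cmp: "\<And>s a. (s, a) \<notin> I \<Longrightarrow> pmf (\<pi> s) a \<le> pmf (\<pi>' s) a"
  shows "emeasure (traj_from P \<pi> s n) {\<xi>. \<exists>(s, a) \<in> set \<xi>. s = t}
     \<le> emeasure (traj_from P \<pi>' s n) {\<xi>. \<exists>(s, a) \<in> set \<xi>. s = t}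
       + emeasure (traj_from P \<pi> s n) {\<xi>. \<exists>x \<in> set \<xi>. x \<in> I}"
proof (induction n arbitrary: s)
  case 0
  show ?case by (cases "s = t") (auto simp: vimage_def)
next
  case (Suc n)
  define A where "A = {\<xi>. \<exists>(s::'s, a::'a) \<in> set \<xi>. s = t}"
  define B where "B = {\<xi>. \<exists>x \<in> set \<xi>. x \<in> I}"
  define F where "F = (\<lambda>s'. emeasure (traj_from P \<pi> s' n) A)"
  define G where "G = (\<lambda>s'. emeasure (traj_from P \<pi>' s' n) A)"
  define H where "H = (\<lambda>s'. emeasure (traj_from P \<pi> s' n) B)"
  have IH: "\<And>s'. F s' \<le> G s' + H s'" using Suc.IH unfolding F_def G_def H_def A_def B_def by blast
  show ?case
  proof (cases "s = t")
    case True
    have "emeasure (traj_from P \<pi> s (Suc n)) A \<le> 1"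
      by (rule measure_pmf.emeasure_le_1)
    also have "\<dots> = emeasure (traj_from P \<pi>' s (Suc n)) A"
      using True by (simp add: A_def vimage_def)
    finally show ?thesis unfolding A_def[symmetric] B_def[symmetric] by (simp add: add_increasing2)
  next
    case False
    have vA: "\<And>a. (\<lambda>xs. (s, a) # xs) -` A = A" using False by (auto simp: A_def)
    have vB: "\<And>a. (\<lambda>xs. (s, a) # xs) -` B = (if (s, a) \<in> I then UNIV else B)" by (auto simp: B_def)
    have eF: "emeasure (traj_from P \<pi> s (Suc n)) A = (\<integral>\<^sup>+a. \<integral>\<^sup>+s'. F s' \<partial>P s a \<partial>\<pi> s)"
      by (simp add: vA F_def)
    have eG: "emeasure (traj_from P \<pi>' s (Suc n)) A = (\<integral>\<^sup>+a. \<integral>\<^sup>+s'. G s' \<partial>P s a \<partial>\<pi>' s)"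
      by (simp add: vA G_def)
    have eB: "emeasure (traj_from P \<pi> s (Suc n)) B = (\<integral>\<^sup>+a. (if (s, a) \<in> I then 1 else \<integral>\<^sup>+s'. H s' \<partial>P s a) \<partial>\<pi> s)"
      by (auto simp: vB H_def intro!: nn_integral_cong)
    have pw: "(\<integral>\<^sup>+s'. F s' \<partial>P s a) \<le> (if (s, a) \<notin> I then \<integral>\<^sup>+s'. G s' \<partial>P s a else 0)
        + (if (s, a) \<in> I then 1 else \<integral>\<^sup>+s'. H s' \<partial>P s a)" for a
    proof (cases "(s, a) \<in> I")
      case True
      have "(\<integral>\<^sup>+s'. F s' \<partial>P s a) \<le> (\<integral>\<^sup>+s'. 1 \<partial>P s a)"
        by (intro nn_integral_mono) (simp add: F_def measure_pmf.emeasure_le_1)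
      then show ?thesis using True by simp
    next
      case False
      have "(\<integral>\<^sup>+s'. F s' \<partial>P s a) \<le> (\<integral>\<^sup>+s'. G s' + H s' \<partial>P s a)"
        by (intro nn_integral_mono IH)
      also have "\<dots> = (\<integral>\<^sup>+s'. G s' \<partial>P s a) + (\<integral>\<^sup>+s'. H s' \<partial>P s a)"
        by (rule nn_integral_add) auto
      finally show ?thesis using False by simp
    qed
    have "(\<integral>\<^sup>+a. \<integral>\<^sup>+s'. F s' \<partial>P s a \<partial>\<pi> s)
       \<le> (\<integral>\<^sup>+a. (if (s, a) \<notin> I then \<integral>\<^sup>+s'. G s' \<partial>P s a else 0)
        + (if (s, a) \<in> I then 1 else \<integral>\<^sup>+s'. H s' \<partial>P s a) \<partial>\<pi> s)"
      by (intro nn_integral_mono pw)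
    also have "\<dots> = (\<integral>\<^sup>+a. (if (s, a) \<notin> I then \<integral>\<^sup>+s'. G s' \<partial>P s a else 0) \<partial>\<pi> s)
        + (\<integral>\<^sup>+a. (if (s, a) \<in> I then 1 else \<integral>\<^sup>+s'. H s' \<partial>P s a) \<partial>\<pi> s)"
      by (rule nn_integral_add) auto
    also have "(\<integral>\<^sup>+a. (if (s, a) \<notin> I then \<integral>\<^sup>+s'. G s' \<partial>P s a else 0) \<partial>\<pi> s)
        \<le> (\<integral>\<^sup>+a. \<integral>\<^sup>+s'. G s' \<partial>P s a \<partial>\<pi>' s)"
      unfolding nn_integral_measure_pmf[where p="\<pi> s"] nn_integral_measure_pmf[where p="\<pi>' s"]
      by (intro nn_integral_mono) (auto intro!: mult_right_mono simp: cmp)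
    finally show ?thesis unfolding A_def[symmetric] B_def[symmetric] eF eG eB by simp
  qed
qed

theorem mainTheorem17:
  fixes d0 :: "'s pmf" and P :: "'s \<Rightarrow> 'a \<Rightarrow> 's pmf"
    and s_tri s_circ :: 's
    and Qbar :: "'s \<Rightarrow> 'a \<Rightarrow> real" and \<mu> :: "'s \<Rightarrow> 'a pmf" and \<eta> :: real
    and \<pi> :: "'s \<Rightarrow> 'a pmf" and h :: nat
  assumes "s_tri \<noteq> s_circ"
    and "0 \<le> \<eta>" and "\<eta> \<le> 1"
    and "\<And>s a. s \<notin> {s_tri, s_circ} \<Longrightarrow> Qbar s a \<in> {0..1}"
    and "partial_set (intervention_set s_tri s_circ Qbar \<mu> \<eta>)"
  shows "measure_pmf.prob (traj d0 P \<pi> h) {\<xi>. \<exists>(s, a) \<in> set \<xi>. s = s_tri}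
     \<le> measure_pmf.prob (traj d0 P (shield (intervention_set s_tri s_circ Qbar \<mu> \<eta>) \<mu> \<pi>) h)
          {\<xi>. \<exists>(s, a) \<in> set \<xi>. s = s_tri}
       + measure_pmf.prob (traj d0 P \<pi> h)
          {\<xi>. \<exists>x \<in> set \<xi>. x \<in> intervention_set s_tri s_circ Qbar \<mu> \<eta>}"
proof -
  define I where "I = intervention_set s_tri s_circ Qbar \<mu> \<eta>"
  define \<pi>' where "\<pi>' = shield I \<mu> \<pi>"
  define A where "A = {\<xi>. \<exists>(s::'s, a::'a) \<in> set \<xi>. s = s_tri}"
  define B where "B = {\<xi>. \<exists>x \<in> set \<xi>. x \<in> I}"
  have cmp: "\<And>s a. (s, a) \<notin> I \<Longrightarrow> pmf (\<pi> s) a \<le> pmf (\<pi>' s) a"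
    unfolding \<pi>'_def pmf_shield by simp
  have lb: "\<And>s. emeasure (traj_from P \<pi> s h) A \<le> emeasure (traj_from P \<pi>' s h) A + emeasure (traj_from P \<pi> s h) B"
    unfolding A_def B_def by (rule traj_from_bound[OF cmp])
  have "emeasure (traj d0 P \<pi> h) A = (\<integral>\<^sup>+s. emeasure (traj_from P \<pi> s h) A \<partial>d0)"
    by (simp add: traj_def)
  also have "\<dots> \<le> (\<integral>\<^sup>+s. emeasure (traj_from P \<pi>' s h) A + emeasure (traj_from P \<pi> s h) B \<partial>d0)"
    by (intro nn_integral_mono lb)
  also have "\<dots> = emeasure (traj d0 P \<pi>' h) A + emeasure (traj d0 P \<pi> h) B"
    by (simp add: traj_def nn_integral_add)
  finally have "ennreal (measure_pmf.prob (traj d0 P \<pi> h) A)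
      \<le> ennreal (measure_pmf.prob (traj d0 P \<pi>' h) A + measure_pmf.prob (traj d0 P \<pi> h) B)"
    by (simp add: measure_pmf.emeasure_eq_measure ennreal_plus)
  then have "measure_pmf.prob (traj d0 P \<pi> h) A
      \<le> measure_pmf.prob (traj d0 P \<pi>' h) A + measure_pmf.prob (traj d0 P \<pi> h) B"
    by (subst (asm) ennreal_le_iff) auto
  then show ?thesis unfolding A_def B_def I_def \<pi>'_def .
qed

end
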